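(* Let $\mathbf{m}_0=(x_0,y_0),\mathbf{m}_1=(x_1,y_1),\mathbf{m}_2=(x_2,y_2)\in\mathbb{R}^2$ be non-collinear and let $\tilde{E}$ be the bifurcation curve, i.e. the degree-5 plane algebraic curve with Cartesian equation $F(\mathbf{x})=0$. Then $\tilde{E}$ has three real ideal points $[x_1-x_2:y_1-y_2:0]$, $[x_2-x_0:y_2-y_0:0]$, $[x_0-x_1:y_0-y_1:0]$ and two complex ideal points $[1:i:0]$, $[1:-i:0]$. The three real asymptotic lines of $\tilde{E}$ have Cartesian equations \[ L_0:\ 4\ast(\mathbf{d}_{12}\wedge\mathbf{d}_0(\mathbf{x}))-3W=0,\quad L_1:\ 4\ast(\mathbf{d}_{20}\wedge\mathbf{d}_1(\mathbf{x}))-3W=0,\quad L_2:\ 4\ast(\mathbf{d}_{01}\wedge\mathbf{d}_2(\mathbf{x}))-3W=0. \] Finally, $L_0\cap L_1\cap L_2=\emptyset$.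
   Context: Notation: for $\mathbf{u}=(u_1,u_2),\mathbf{v}=(v_1,v_2)\in\mathbb{R}^2$, $\ast(\mathbf{u}\wedge\mathbf{v})=u_1v_2-u_2v_1$. $\mathbf{d}_i(\mathbf{x})=\mathbf{x}-\mathbf{m}_i$, $\mathbf{d}_{ji}=\mathbf{m}_j-\mathbf{m}_i$, $d_i(\mathbf{x})=\Vert\mathbf{d}_i(\mathbf{x})\Vert$, $d_{ji}=\Vert\mathbf{d}_{ji}\Vert$, $W=\ast(\mathbf{d}_{10}\wedge\mathbf{d}_{20})$. Bifurcation curve: with TDOA map $\boldsymbol{\tau}_2(\mathbf{x})=(d_1(\mathbf{x})-d_0(\mathbf{x}),d_2(\mathbf{x})-d_0(\mathbf{x}))$ and ellipse $E:\Vert\tau_2\mathbf{d}_{10}-\tau_1\mathbf{d}_{20}\Vert^2-W^2=0$, $\tilde{E}=\boldsymbol{\tau}_2^{-1}(E)$, whose Cartesian equation is $F(\mathbf{x})=0$ with $F=Q^4-8Q^2(P_{01}^2+P_{12}^2+P_{20}^2)+64QP_{01}P_{12}P_{20}+16(P_{01}^4+P_{12}^4+P_{20}^4)-32(P_{01}^2P_{12}^2+P_{12}^2P_{20}^2+P_{20}^2P_{01}^2)$, a polynomial of degree 5 in $(x,y)$, where $\mathbf{D}_0(\mathbf{x})=d_0(\mathbf{x})\mathbf{d}_{12}$, $\mathbf{D}_1(\mathbf{x})=d_1(\mathbf{x})\mathbf{d}_{20}$, $\mathbf{D}_2(\mathbf{x})=d_2(\mathbf{x})\mathbf{d}_{01}$,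 $Q(\mathbf{x})=\sum_i\Vert\mathbf{D}_i(\mathbf{x})\Vert^2-W^2$, $P_{ij}(\mathbf{x})=\mathbf{D}_i(\mathbf{x})\cdot\mathbf{D}_j(\mathbf{x})$. Projective conventions: embed the affine plane into $\mathbb{P}^2$ via $x=X/U$, $y=Y/U$, with ideal line $U=0$; the ideal points of a curve are its intersections with the ideal line (over $\mathbb{C}$); an asymptotic line is an affine line tangent to the curve at one of its smooth ideal points. *)

theory Defs
  imports "HOL-Analysis.Analysis"
begin

text \<open>Points of the real plane are pairs of reals; norm and inner product are
  the Euclidean ones on pairs of reals (Product_Vector).\<close>

definition wedge :: "real \<times> real \<Rightarrow> real \<times> real \<Rightarrow> real" where
  "wedge u v = fst u * snd v - snd u * fst v"

definition Wdet :: "real \<times> real \<Rightarrow> real \<times> real \<Rightarrow> real \<times> real \<Rightarrow> real" where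
  "Wdet m0 m1 m2 = wedge (m1 - m0) (m2 - m0)"

text \<open>The Cartesian equation F of the bifurcation curve, literally as in the paper
  (d_i(x) = norm (x - m_i), d_ji = m_j - m_i).\<close>
definition bifF :: "real \<times> real \<Rightarrow> real \<times> real \<Rightarrow> real \<times> real \<Rightarrow> real \<times> real \<Rightarrow> real" where
  "bifF m0 m1 m2 x =
    (let W = Wdet m0 m1 m2;
         D0 = norm (x - m0) *\<^sub>R (m1 - m2);
         D1 = norm (x - m1) *\<^sub>R (m2 - m0);
         D2 = norm (x - m2) *\<^sub>R (m0 - m1);
         Q = (norm D0)\<^sup>2 + (norm D1)\<^sup>2 + (norm D2)\<^sup>2 - W\<^sup>2;
         P01 = D0 \<bullet> D1; P12 = D1 \<bullet> D2; P20 = D2 \<bullet> D0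
     in Q^4 - 8 * Q\<^sup>2 * (P01\<^sup>2 + P12\<^sup>2 + P20\<^sup>2) + 64 * Q * P01 * P12 * P20
        + 16 * (P01^4 + P12^4 + P20^4)
        - 32 * (P01\<^sup>2 * P12\<^sup>2 + P12\<^sup>2 * P20\<^sup>2 + P20\<^sup>2 * P01\<^sup>2))"

text \<open>The same polynomial, written in terms of squared distances only, so that it
  extends to complex arguments (needed for the complex ideal points).\<close>
definition bifFc :: "real \<times> real \<Rightarrow> real \<times> real \<Rightarrow> real \<times> real \<Rightarrow> complex \<Rightarrow> complex \<Rightarrow> complex" where
  "bifFc m0 m1 m2 z w =
    (let W = complex_of_real (Wdet m0 m1 m2);
         v0 = m1 - m2; v1 = m2 - m0; v2 = m0 - m1;
         s0 = (z - of_real (fst m0))\<^sup>2 + (w - of_real (snd m0))\<^sup>2;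
         s1 = (z - of_real (fst m1))\<^sup>2 + (w - of_real (snd m1))\<^sup>2;
         s2 = (z - of_real (fst m2))\<^sup>2 + (w - of_real (snd m2))\<^sup>2;
         Q = s0 * of_real ((norm v0)\<^sup>2) + s1 * of_real ((norm v1)\<^sup>2)
             + s2 * of_real ((norm v2)\<^sup>2) - W\<^sup>2;
         S01 = s0 * s1 * of_real ((v0 \<bullet> v1)\<^sup>2);
         S12 = s1 * s2 * of_real ((v1 \<bullet> v2)\<^sup>2);
         S20 = s2 * s0 * of_real ((v2 \<bullet> v0)\<^sup>2);
         PPP = s0 * s1 * s2 * of_real ((v0 \<bullet> v1) * (v1 \<bullet> v2) * (v2 \<bullet> v0))
     in Q^4 - 8 * Q\<^sup>2 * (S01 + S12 + S20) + 64 * Q * PPP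
        + 16 * (S01\<^sup>2 + S12\<^sup>2 + S20\<^sup>2)
        - 32 * (S01 * S12 + S12 * S20 + S20 * S01))"

lemma norm_sq_pair: "(norm (x - m :: real \<times> real))\<^sup>2 = (fst x - fst m)\<^sup>2 + (snd x - snd m)\<^sup>2"
  by (cases x; cases m) (simp add: norm_Pair)

lemma bifFc_real:
  "bifFc m0 m1 m2 (of_real (fst x)) (of_real (snd x)) = of_real (bifF m0 m1 m2 x)"
proof -
  have sq: "\<And>m. (complex_of_real (fst x) - of_real (fst m))\<^sup>2 + (of_real (snd x) - of_real (snd m))\<^sup>2
             = of_real ((norm (x - m))\<^sup>2)"
    by (simp add: norm_sq_pair)
  define a0 where "a0 = norm (x - m0)"
  define a1 where "a1 = norm (x - m1)"
  define a2 where "a2 = norm (x - m2)"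
  define v0 where "v0 = m1 - m2"
  define v1 where "v1 = m2 - m0"
  define v2 where "v2 = m0 - m1"
  define W where "W = Wdet m0 m1 m2"
  define Q where "Q = a0\<^sup>2 * (norm v0)\<^sup>2 + a1\<^sup>2 * (norm v1)\<^sup>2 + a2\<^sup>2 * (norm v2)\<^sup>2 - W\<^sup>2"
  have nD: "\<And>a v. (norm (a *\<^sub>R (v::real\<times>real)))\<^sup>2 = a\<^sup>2 * (norm v)\<^sup>2"
    by (simp add: power_mult_distrib)
  have iD: "\<And>a b u v. (a *\<^sub>R (u::real\<times>real)) \<bullet> (b *\<^sub>R v) = a * b * (u \<bullet> v)"
    by simp
  have rhs: "bifF m0 m1 m2 x =
     Q^4 - 8 * Q\<^sup>2 * ((a0*a1*(v0\<bullet>v1))\<^sup>2 + (a1*a2*(v1\<bullet>v2))\<^sup>2 + (a2*a0*(v2\<bullet>v0))\<^sup>2)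
      + 64 * Q * (a0*a1*(v0\<bullet>v1)) * (a1*a2*(v1\<bullet>v2)) * (a2*a0*(v2\<bullet>v0))
      + 16 * ((a0*a1*(v0\<bullet>v1))^4 + (a1*a2*(v1\<bullet>v2))^4 + (a2*a0*(v2\<bullet>v0))^4)
      - 32 * ((a0*a1*(v0\<bullet>v1))\<^sup>2 * (a1*a2*(v1\<bullet>v2))\<^sup>2 + (a1*a2*(v1\<bullet>v2))\<^sup>2 * (a2*a0*(v2\<bullet>v0))\<^sup>2
              + (a2*a0*(v2\<bullet>v0))\<^sup>2 * (a0*a1*(v0\<bullet>v1))\<^sup>2)"
    unfolding bifF_def Let_def nD iD a0_def a1_def a2_def v0_def v1_def v2_def W_def Q_def ..
  have lhs: "bifFc m0 m1 m2 (of_real (fst x)) (of_real (snd x)) =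
     (let S01 = a0\<^sup>2 * a1\<^sup>2 * (v0 \<bullet> v1)\<^sup>2; S12 = a1\<^sup>2 * a2\<^sup>2 * (v1 \<bullet> v2)\<^sup>2;
          S20 = a2\<^sup>2 * a0\<^sup>2 * (v2 \<bullet> v0)\<^sup>2;
          PPP = a0\<^sup>2 * a1\<^sup>2 * a2\<^sup>2 * ((v0 \<bullet> v1) * (v1 \<bullet> v2) * (v2 \<bullet> v0))
      in complex_of_real (Q^4 - 8 * Q\<^sup>2 * (S01 + S12 + S20) + 64 * Q * PPP
        + 16 * (S01\<^sup>2 + S12\<^sup>2 + S20\<^sup>2) - 32 * (S01 * S12 + S12 * S20 + S20 * S01)))"
    unfolding bifFc_def Let_def sq a0_def a1_def a2_def v0_def v1_def v2_def W_def Q_def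
    by (simp only: of_real_add of_real_mult of_real_diff of_real_power of_real_numeral)
  show ?thesis
    unfolding lhs rhs Let_def
    by (simp only: of_real_eq_iff) algebra
qed

text \<open>Projective closure: embedding x = X/U, y = Y/U. Since F has degree 5, its
  homogenization is U^5 F(X/U, Y/U), extended to U = 0 by continuity.\<close>
definition bifFh :: "real \<times> real \<Rightarrow> real \<times> real \<Rightarrow> real \<times> real \<Rightarrow> complex \<Rightarrow> complex \<Rightarrow> complex \<Rightarrow> complex" where
  "bifFh m0 m1 m2 X Y U =
     (if U \<noteq> 0 then U ^ 5 * bifFc m0 m1 m2 (X / U) (Y / U)
      else Lim (at 0) (\<lambda>t. t ^ 5 * bifFc m0 m1 m2 (X / t) (Y / t)))"

definition is_ideal_point :: "real \<times> real \<Rightarrow> real \<times> real \<Rightarrow> real \<times> real \<Rightarrow> complex \<Rightarrow> complex \<Rightarrow> bool" where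
  "is_ideal_point m0 m1 m2 X Y \<longleftrightarrow> (X, Y) \<noteq> (0, 0) \<and>
     ((\<lambda>t. t ^ 5 * bifFc m0 m1 m2 (X / t) (Y / t)) \<longlongrightarrow> 0) (at 0)"

definition same_ideal :: "complex \<Rightarrow> complex \<Rightarrow> complex \<Rightarrow> complex \<Rightarrow> bool" where
  "same_ideal X Y a b \<longleftrightarrow> (\<exists>c. c \<noteq> 0 \<and> X = c * a \<and> Y = c * b)"

definition gradFh :: "real \<times> real \<Rightarrow> real \<times> real \<Rightarrow> real \<times> real \<Rightarrow> complex \<Rightarrow> complex \<Rightarrow> complex \<Rightarrow> complex \<times> complex \<times> complex" where
  "gradFh m0 m1 m2 X Y U =
     (deriv (\<lambda>s. bifFh m0 m1 m2 s Y U) X,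
      deriv (\<lambda>s. bifFh m0 m1 m2 X s U) Y,
      deriv (\<lambda>s. bifFh m0 m1 m2 X Y s) U)"

definition smooth_point :: "real \<times> real \<Rightarrow> real \<times> real \<Rightarrow> real \<times> real \<Rightarrow> complex \<Rightarrow> complex \<Rightarrow> complex \<Rightarrow> bool" where
  "smooth_point m0 m1 m2 X Y U \<longleftrightarrow> bifFh m0 m1 m2 X Y U = 0 \<and> gradFh m0 m1 m2 X Y U \<noteq> (0, 0, 0)"

definition tangent_affine :: "real \<times> real \<Rightarrow> real \<times> real \<Rightarrow> real \<times> real \<Rightarrow> complex \<Rightarrow> complex \<Rightarrow> complex \<Rightarrow> (real \<times> real) set" where
  "tangent_affine m0 m1 m2 X Y U =
     {p. (case gradFh m0 m1 m2 X Y U of (gX, gY, gU) \<Rightarrow>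
           gX * of_real (fst p) + gY * of_real (snd p) + gU = 0)}"

definition is_asymptote_at :: "real \<times> real \<Rightarrow> real \<times> real \<Rightarrow> real \<times> real \<Rightarrow> complex \<Rightarrow> complex \<Rightarrow> (real \<times> real) set \<Rightarrow> bool" where
  "is_asymptote_at m0 m1 m2 X Y L \<longleftrightarrow>
     is_ideal_point m0 m1 m2 X Y \<and> smooth_point m0 m1 m2 X Y 0 \<and> L = tangent_affine m0 m1 m2 X Y 0"

end

theory Submission imports Defs begin

definition Gpoly :: "complex \<Rightarrow> complex \<Rightarrow> complex \<Rightarrow> complex \<Rightarrow> complex \<Rightarrow> complex" where
 "Gpoly al be b c g = (- 64*al^4*be*b^2*c^2 - 64*al^4*be*b*c^3 + 128*al^4*be*b*c^2*g + 16*al^4*b^2*c^2 + 16*al^4*b*c^3 - 32*al^4*b*c^2*g - 64*al^3*be^2*b^2*c^2 - 128*al^3*be^2*b^2*c*g - 64*al^3*be^2*b*c^3 + 256*al^3*be^2*b*c*g^2 + 128*al^3*be*b^2*c^2 + 64*al^3*be*b^2*c*g + 64*al^3*be*b*c^3 - 64*al^3*be*b*c^2*g - 128*al^3*be*b*c*g^2 + 64*al^3*be*c^2*g^2 - 128*al^3*be*c*g^3 - 32*al^3*b^2*c^2 - 16*al^3*b*c^3 + 32*al^3*b*c^2*g - 16*al^3*c^2*g^2 + 32*al^3*c*g^3 - 64*al^2*be^3*b^3*c - 64*al^2*be^3*b^2*c^2 - 128*al^2*be^3*b*c^2*g + 256*al^2*be^3*b*c*g^2 + 128*al^2*be^2*b^2*c^2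 + 224*al^2*be^2*b^2*c*g + 64*al^2*be^2*b^2*g^2 + 224*al^2*be^2*b*c^2*g - 448*al^2*be^2*b*c*g^2 - 128*al^2*be^2*b*g^3 + 64*al^2*be^2*c^2*g^2 - 128*al^2*be^2*c*g^3 - 112*al^2*be*b^2*c^2 - 96*al^2*be*b^2*c*g - 96*al^2*be*b*c^2*g + 176*al^2*be*b*c*g^2 - 64*al^2*be*c^2*g^2 + 128*al^2*be*c*g^3 + 64*al^2*be*g^4 + 24*al^2*b^2*c^2 + 8*al^2*b*c^2*g - 8*al^2*b*c*g^2 + 16*al^2*c^2*g^2 - 40*al^2*c*g^3 - 64*al*be^4*b^3*c - 64*al*be^4*b^2*c^2 + 128*al*be^4*b^2*c*g + 64*al*be^3*b^3*c + 128*al*be^3*b^2*c^2 - 64*al*be^3*b^2*c*g + 64*al*be^3*b^2*g^2 + 64*al*be^3*b*c^2*g - 128*al*be^3*b*c*g^2 - 128*al*be^3*b*g^3 - 112*al*be^2*b^2*c^2 - 96*al*be^2*b^2*c*g - 64*al*be^2*b^2*g^2 - 96*al*be^2*b*c^2*g + 176*al*be^2*b*c*g^2 + 128*al*be^2*b*g^3 + 64*al*be^2*g^4 + 48*al*be*b^2*c^2 + 48*al*be*b^2*c*g + 48*al*be*b*c^2*g - 64*al*be*b*c*g^2 - 16*al*be*b*g^3 - 16*al*be*c*g^3 - 48*al*be*g^4 - 8*al*b^2*c^2 - 8*al*b*c^2*g + 8*al*b*c*g^2 + 8*al*c*g^3 + 16*be^4*b^3*c + 16*be^4*b^2*c^2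 - 32*be^4*b^2*c*g - 16*be^3*b^3*c - 32*be^3*b^2*c^2 + 32*be^3*b^2*c*g - 16*be^3*b^2*g^2 + 32*be^3*b*g^3 + 24*be^2*b^2*c^2 + 8*be^2*b^2*c*g + 16*be^2*b^2*g^2 - 8*be^2*b*c*g^2 - 40*be^2*b*g^3 - 8*be*b^2*c^2 - 8*be*b^2*c*g + 8*be*b*c*g^2 + 8*be*b*g^3 + b^2*c^2 - 2*b*c*g^2 + g^4)"
definition Gh :: "complex \<Rightarrow> complex \<Rightarrow> complex \<Rightarrow> complex \<Rightarrow> complex \<Rightarrow> complex \<Rightarrow> complex" where
 "Gh al be u b c g = (- 64*al^4*be*b^2*c^2 - 64*al^4*be*b*c^3 + 128*al^4*be*b*c^2*g + 16*al^4*u*b^2*c^2 + 16*al^4*u*b*c^3 - 32*al^4*u*b*c^2*g - 64*al^3*be^2*b^2*c^2 - 128*al^3*be^2*b^2*c*g - 64*al^3*be^2*b*c^3 + 256*al^3*be^2*b*c*g^2 + 128*al^3*be*u*b^2*c^2 + 64*al^3*be*u*b^2*c*g + 64*al^3*be*u*b*c^3 - 64*al^3*be*u*b*c^2*g - 128*al^3*be*u*b*c*g^2 + 64*al^3*be*u*c^2*g^2 - 128*al^3*be*u*c*g^3 - 32*al^3*u^2*b^2*c^2 - 16*al^3*u^2*b*c^3 + 32*al^3*u^2*b*c^2*g - 16*al^3*u^2*c^2*g^2 + 32*al^3*u^2*c*g^3 - 64*al^2*be^3*b^3*c - 64*al^2*be^3*b^2*c^2 - 128*al^2*be^3*b*c^2*g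 + 256*al^2*be^3*b*c*g^2 + 128*al^2*be^2*u*b^2*c^2 + 224*al^2*be^2*u*b^2*c*g + 64*al^2*be^2*u*b^2*g^2 + 224*al^2*be^2*u*b*c^2*g - 448*al^2*be^2*u*b*c*g^2 - 128*al^2*be^2*u*b*g^3 + 64*al^2*be^2*u*c^2*g^2 - 128*al^2*be^2*u*c*g^3 - 112*al^2*be*u^2*b^2*c^2 - 96*al^2*be*u^2*b^2*c*g - 96*al^2*be*u^2*b*c^2*g + 176*al^2*be*u^2*b*c*g^2 - 64*al^2*be*u^2*c^2*g^2 + 128*al^2*be*u^2*c*g^3 + 64*al^2*be*u^2*g^4 + 24*al^2*u^3*b^2*c^2 + 8*al^2*u^3*b*c^2*g - 8*al^2*u^3*b*c*g^2 + 16*al^2*u^3*c^2*g^2 - 40*al^2*u^3*c*g^3 - 64*al*be^4*b^3*c - 64*al*be^4*b^2*c^2 + 128*al*be^4*b^2*c*g + 64*al*be^3*u*b^3*c + 128*al*be^3*u*b^2*c^2 - 64*al*be^3*u*b^2*c*g + 64*al*be^3*u*b^2*g^2 + 64*al*be^3*u*b*c^2*g - 128*al*be^3*u*b*c*g^2 - 128*al*be^3*u*b*g^3 - 112*al*be^2*u^2*b^2*c^2 - 96*al*be^2*u^2*b^2*c*g - 64*al*be^2*u^2*b^2*g^2 - 96*al*be^2*u^2*b*c^2*g + 176*al*be^2*u^2*b*c*g^2 + 128*al*be^2*u^2*b*g^3 + 64*al*be^2*u^2*g^4 + 48*al*be*u^3*b^2*c^2 + 48*al*be*u^3*b^2*c*g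 + 48*al*be*u^3*b*c^2*g - 64*al*be*u^3*b*c*g^2 - 16*al*be*u^3*b*g^3 - 16*al*be*u^3*c*g^3 - 48*al*be*u^3*g^4 - 8*al*u^4*b^2*c^2 - 8*al*u^4*b*c^2*g + 8*al*u^4*b*c*g^2 + 8*al*u^4*c*g^3 + 16*be^4*u*b^3*c + 16*be^4*u*b^2*c^2 - 32*be^4*u*b^2*c*g - 16*be^3*u^2*b^3*c - 32*be^3*u^2*b^2*c^2 + 32*be^3*u^2*b^2*c*g - 16*be^3*u^2*b^2*g^2 + 32*be^3*u^2*b*g^3 + 24*be^2*u^3*b^2*c^2 + 8*be^2*u^3*b^2*c*g + 16*be^2*u^3*b^2*g^2 - 8*be^2*u^3*b*c*g^2 - 40*be^2*u^3*b*g^3 - 8*be*u^4*b^2*c^2 - 8*be*u^4*b^2*c*g + 8*be*u^4*b*c*g^2 + 8*be*u^4*b*g^3 + u^5*b^2*c^2 - 2*u^5*b*c*g^2 + u^5*g^4)"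
definition GhA :: "complex \<Rightarrow> complex \<Rightarrow> complex \<Rightarrow> complex \<Rightarrow> complex \<Rightarrow> complex \<Rightarrow> complex" where
 "GhA al be u b c g = (- 256*al^3*be*b^2*c^2 - 256*al^3*be*b*c^3 + 512*al^3*be*b*c^2*g + 64*al^3*u*b^2*c^2 + 64*al^3*u*b*c^3 - 128*al^3*u*b*c^2*g - 192*al^2*be^2*b^2*c^2 - 384*al^2*be^2*b^2*c*g - 192*al^2*be^2*b*c^3 + 768*al^2*be^2*b*c*g^2 + 384*al^2*be*u*b^2*c^2 + 192*al^2*be*u*b^2*c*g + 192*al^2*be*u*b*c^3 - 192*al^2*be*u*b*c^2*g - 384*al^2*be*u*b*c*g^2 + 192*al^2*be*u*c^2*g^2 - 384*al^2*be*u*c*g^3 - 96*al^2*u^2*b^2*c^2 - 48*al^2*u^2*b*c^3 + 96*al^2*u^2*b*c^2*g - 48*al^2*u^2*c^2*g^2 + 96*al^2*u^2*c*g^3 - 128*al*be^3*b^3*c - 128*al*be^3*b^2*c^2 - 256*al*be^3*b*c^2*g + 512*al*be^3*b*c*g^2 + 256*al*be^2*u*b^2*c^2 + 448*al*be^2*u*b^2*c*g + 128*al*be^2*u*b^2*g^2 + 448*al*be^2*u*b*c^2*g - 896*al*be^2*u*b*c*g^2 - 256*al*be^2*u*b*g^3 + 128*al*be^2*u*c^2*g^2 - 256*al*be^2*u*c*g^3 - 224*al*be*u^2*b^2*c^2 - 192*al*be*u^2*b^2*c*g - 192*al*be*u^2*b*c^2*g + 352*al*be*u^2*b*c*g^2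 - 128*al*be*u^2*c^2*g^2 + 256*al*be*u^2*c*g^3 + 128*al*be*u^2*g^4 + 48*al*u^3*b^2*c^2 + 16*al*u^3*b*c^2*g - 16*al*u^3*b*c*g^2 + 32*al*u^3*c^2*g^2 - 80*al*u^3*c*g^3 - 64*be^4*b^3*c - 64*be^4*b^2*c^2 + 128*be^4*b^2*c*g + 64*be^3*u*b^3*c + 128*be^3*u*b^2*c^2 - 64*be^3*u*b^2*c*g + 64*be^3*u*b^2*g^2 + 64*be^3*u*b*c^2*g - 128*be^3*u*b*c*g^2 - 128*be^3*u*b*g^3 - 112*be^2*u^2*b^2*c^2 - 96*be^2*u^2*b^2*c*g - 64*be^2*u^2*b^2*g^2 - 96*be^2*u^2*b*c^2*g + 176*be^2*u^2*b*c*g^2 + 128*be^2*u^2*b*g^3 + 64*be^2*u^2*g^4 + 48*be*u^3*b^2*c^2 + 48*be*u^3*b^2*c*g + 48*be*u^3*b*c^2*g - 64*be*u^3*b*c*g^2 - 16*be*u^3*b*g^3 - 16*be*u^3*c*g^3 - 48*be*u^3*g^4 - 8*u^4*b^2*c^2 - 8*u^4*b*c^2*g + 8*u^4*b*c*g^2 + 8*u^4*c*g^3)"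
definition GhB :: "complex \<Rightarrow> complex \<Rightarrow> complex \<Rightarrow> complex \<Rightarrow> complex \<Rightarrow> complex \<Rightarrow> complex" where
 "GhB al be u b c g = (- 64*al^4*b^2*c^2 - 64*al^4*b*c^3 + 128*al^4*b*c^2*g - 128*al^3*be*b^2*c^2 - 256*al^3*be*b^2*c*g - 128*al^3*be*b*c^3 + 512*al^3*be*b*c*g^2 + 128*al^3*u*b^2*c^2 + 64*al^3*u*b^2*c*g + 64*al^3*u*b*c^3 - 64*al^3*u*b*c^2*g - 128*al^3*u*b*c*g^2 + 64*al^3*u*c^2*g^2 - 128*al^3*u*c*g^3 - 192*al^2*be^2*b^3*c - 192*al^2*be^2*b^2*c^2 - 384*al^2*be^2*b*c^2*g + 768*al^2*be^2*b*c*g^2 + 256*al^2*be*u*b^2*c^2 + 448*al^2*be*u*b^2*c*g + 128*al^2*be*u*b^2*g^2 + 448*al^2*be*u*b*c^2*g - 896*al^2*be*u*b*c*g^2 - 256*al^2*be*u*b*g^3 + 128*al^2*be*u*c^2*g^2 - 256*al^2*be*u*c*g^3 - 112*al^2*u^2*b^2*c^2 - 96*al^2*u^2*b^2*c*g - 96*al^2*u^2*b*c^2*g + 176*al^2*u^2*b*c*g^2 - 64*al^2*u^2*c^2*g^2 + 128*al^2*u^2*c*g^3 + 64*al^2*u^2*g^4 - 256*al*be^3*b^3*c - 256*al*be^3*b^2*c^2 + 512*al*be^3*b^2*c*g + 192*al*be^2*u*b^3*c + 384*al*be^2*u*b^2*c^2 - 192*al*be^2*u*b^2*c*g + 192*al*be^2*u*b^2*g^2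 + 192*al*be^2*u*b*c^2*g - 384*al*be^2*u*b*c*g^2 - 384*al*be^2*u*b*g^3 - 224*al*be*u^2*b^2*c^2 - 192*al*be*u^2*b^2*c*g - 128*al*be*u^2*b^2*g^2 - 192*al*be*u^2*b*c^2*g + 352*al*be*u^2*b*c*g^2 + 256*al*be*u^2*b*g^3 + 128*al*be*u^2*g^4 + 48*al*u^3*b^2*c^2 + 48*al*u^3*b^2*c*g + 48*al*u^3*b*c^2*g - 64*al*u^3*b*c*g^2 - 16*al*u^3*b*g^3 - 16*al*u^3*c*g^3 - 48*al*u^3*g^4 + 64*be^3*u*b^3*c + 64*be^3*u*b^2*c^2 - 128*be^3*u*b^2*c*g - 48*be^2*u^2*b^3*c - 96*be^2*u^2*b^2*c^2 + 96*be^2*u^2*b^2*c*g - 48*be^2*u^2*b^2*g^2 + 96*be^2*u^2*b*g^3 + 48*be*u^3*b^2*c^2 + 16*be*u^3*b^2*c*g + 32*be*u^3*b^2*g^2 - 16*be*u^3*b*c*g^2 - 80*be*u^3*b*g^3 - 8*u^4*b^2*c^2 - 8*u^4*b^2*c*g + 8*u^4*b*c*g^2 + 8*u^4*b*g^3)"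
definition GhU :: "complex \<Rightarrow> complex \<Rightarrow> complex \<Rightarrow> complex \<Rightarrow> complex \<Rightarrow> complex \<Rightarrow> complex" where
 "GhU al be u b c g = (16*al^4*b^2*c^2 + 16*al^4*b*c^3 - 32*al^4*b*c^2*g + 128*al^3*be*b^2*c^2 + 64*al^3*be*b^2*c*g + 64*al^3*be*b*c^3 - 64*al^3*be*b*c^2*g - 128*al^3*be*b*c*g^2 + 64*al^3*be*c^2*g^2 - 128*al^3*be*c*g^3 - 64*al^3*u*b^2*c^2 - 32*al^3*u*b*c^3 + 64*al^3*u*b*c^2*g - 32*al^3*u*c^2*g^2 + 64*al^3*u*c*g^3 + 128*al^2*be^2*b^2*c^2 + 224*al^2*be^2*b^2*c*g + 64*al^2*be^2*b^2*g^2 + 224*al^2*be^2*b*c^2*g - 448*al^2*be^2*b*c*g^2 - 128*al^2*be^2*b*g^3 + 64*al^2*be^2*c^2*g^2 - 128*al^2*be^2*c*g^3 - 224*al^2*be*u*b^2*c^2 - 192*al^2*be*u*b^2*c*g - 192*al^2*be*u*b*c^2*g + 352*al^2*be*u*b*c*g^2 - 128*al^2*be*u*c^2*g^2 + 256*al^2*be*u*c*g^3 + 128*al^2*be*u*g^4 + 72*al^2*u^2*b^2*c^2 + 24*al^2*u^2*b*c^2*g - 24*al^2*u^2*b*c*g^2 + 48*al^2*u^2*c^2*g^2 - 120*al^2*u^2*c*g^3 + 64*al*be^3*b^3*c + 128*al*be^3*b^2*c^2 - 64*al*be^3*b^2*c*g + 64*al*be^3*b^2*g^2 + 64*al*be^3*b*c^2*g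 - 128*al*be^3*b*c*g^2 - 128*al*be^3*b*g^3 - 224*al*be^2*u*b^2*c^2 - 192*al*be^2*u*b^2*c*g - 128*al*be^2*u*b^2*g^2 - 192*al*be^2*u*b*c^2*g + 352*al*be^2*u*b*c*g^2 + 256*al*be^2*u*b*g^3 + 128*al*be^2*u*g^4 + 144*al*be*u^2*b^2*c^2 + 144*al*be*u^2*b^2*c*g + 144*al*be*u^2*b*c^2*g - 192*al*be*u^2*b*c*g^2 - 48*al*be*u^2*b*g^3 - 48*al*be*u^2*c*g^3 - 144*al*be*u^2*g^4 - 32*al*u^3*b^2*c^2 - 32*al*u^3*b*c^2*g + 32*al*u^3*b*c*g^2 + 32*al*u^3*c*g^3 + 16*be^4*b^3*c + 16*be^4*b^2*c^2 - 32*be^4*b^2*c*g - 32*be^3*u*b^3*c - 64*be^3*u*b^2*c^2 + 64*be^3*u*b^2*c*g - 32*be^3*u*b^2*g^2 + 64*be^3*u*b*g^3 + 72*be^2*u^2*b^2*c^2 + 24*be^2*u^2*b^2*c*g + 48*be^2*u^2*b^2*g^2 - 24*be^2*u^2*b*c*g^2 - 120*be^2*u^2*b*g^3 - 32*be*u^3*b^2*c^2 - 32*be*u^3*b^2*c*g + 32*be*u^3*b*c*g^2 + 32*be*u^3*b*g^3 + 5*u^4*b^2*c^2 - 10*u^4*b*c*g^2 + 5*u^4*g^4)"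

lemma key:
  fixes al be b c g :: complex
  assumes "Q = (c*al^2+2*g*al*be+b*be^2)*(b+c-2*g) + (c*(al-1)^2+2*g*(al-1)*be+b*be^2)*b
     + (c*al^2+2*g*al*(be-1)+b*(be-1)^2)*c - (b*c-g^2)"
   "S01 = (c*al^2+2*g*al*be+b*be^2)*(c*(al-1)^2+2*g*(al-1)*be+b*be^2)*(g-b)^2"
   "S12 = (c*(al-1)^2+2*g*(al-1)*be+b*be^2)*(c*al^2+2*g*al*(be-1)+b*(be-1)^2)*(-g)^2"
   "S20 = (c*al^2+2*g*al*(be-1)+b*(be-1)^2)*(c*al^2+2*g*al*be+b*be^2)*(g-c)^2"
   "PPP = (c*al^2+2*g*al*be+b*be^2)*(c*(al-1)^2+2*g*(al-1)*be+b*be^2)*(c*al^2+2*g*al*(be-1)+b*(be-1)^2)*((g-b)*(-g)*(g-c))"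
  shows "Q^4 - 8 * Q^2 * (S01 + S12 + S20) + 64 * Q * PPP
        + 16 * (S01^2 + S12^2 + S20^2)
        - 32 * (S01 * S12 + S12 * S20 + S20 * S01) = (b*c-g^2)^2 * Gpoly al be b c g"
  unfolding assms Gpoly_def by algebra

lemma Gh_hom: "Gh (t*A) (t*B) t b c g = t^5 * Gpoly A B b c g"
  unfolding Gh_def Gpoly_def by algebra

lemma Gh_top: "Gh A B 0 b c g = -64*(b+c-2*g)*b*c*A*B*(A+B)*(c*A^2+2*g*A*B+b*B^2)"
  unfolding Gh_def by (simp; algebra)

lemma Gh_deriv:
  assumes "(A has_field_derivative a) (at t)" "(B has_field_derivative bb) (at t)"
      "(U has_field_derivative u) (at t)"
  shows "((\<lambda>s. Gh (A s) (B s) (U s) b c g) has_field_derivative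
     (a * GhA (A t) (B t) (U t) b c g + bb * GhB (A t) (B t) (U t) b c g + u * GhU (A t) (B t) (U t) b c g)) (at t)"
  unfolding Gh_def
  apply (rule derivative_eq_intros assms refl | assumption)+
  unfolding GhA_def GhB_def GhU_def
  by simp algebra

lemma GhP1: "GhA 1 (-1) 0 b c g = 64*(b+c-2*g)^2*b*c" "GhB 1 (-1) 0 b c g = 64*(b+c-2*g)^2*b*c"
   "GhU 1 (-1) 0 b c g = -48*(b+c-2*g)^2*b*c"
  unfolding GhA_def GhB_def GhU_def by (simp; algebra)+

lemma GhP2: "GhA 0 1 0 b c g = -64*(b+c-2*g)*b^2*c" "GhB 0 1 0 b c g = 0"
   "GhU 0 1 0 b c g = 16*(b+c-2*g)*b^2*c"
  unfolding GhA_def GhB_def GhU_def by (simp; algebra)+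

lemma GhP3: "GhA (-1) 0 0 b c g = 0" "GhB (-1) 0 0 b c g = -64*(b+c-2*g)*b*c^2"
   "GhU (-1) 0 0 b c g = 16*(b+c-2*g)*b*c^2"
  unfolding GhA_def GhB_def GhU_def by (simp; algebra)+

lemma inner_pair_eq: "(u::real\<times>real) \<bullet> v = fst u * fst v + snd u * snd v"
  by (simp add: inner_prod_def)

lemma same_ideal_iff:
  assumes "(u, v) \<noteq> (0::complex, 0::complex)"
  shows "same_ideal X Y u v \<longleftrightarrow> (X, Y) \<noteq> (0, 0) \<and> X * v = Y * u"
proof
  assume "same_ideal X Y u v"
  then obtain k where k: "k \<noteq> 0" "X = k * u" "Y = k * v" unfolding same_ideal_def by blast
  then show "(X, Y) \<noteq> (0, 0) \<and> X * v = Y * u" using assms by auto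
next
  assume h: "(X, Y) \<noteq> (0, 0) \<and> X * v = Y * u"
  show "same_ideal X Y u v"
  proof (cases "u = 0")
    case True
    then have v: "v \<noteq> 0" using assms by auto
    with h True have "X = 0" by auto
    with h have "Y \<noteq> 0" by auto
    show ?thesis unfolding same_ideal_def
      by (rule exI[of _ "Y / v"]) (use v True \<open>X = 0\<close> \<open>Y \<noteq> 0\<close> in auto)
  next
    case False
    have "Y = X / u * v" using h False by (auto simp: field_simps)
    moreover have "X \<noteq> 0" using h False \<open>Y = X / u * v\<close> by auto
    ultimately show ?thesis unfolding same_ideal_def
      by (intro exI[of _ "X / u"]) (use False in auto)
  qed
qed

lemma frac_add: "a + b = (c::complex) \<Longrightarrow> a/d + b/d = c/d"
  by (simp add: add_divide_distrib[symmetric])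

locale tri =
  fixes m0 m1 m2 :: "real \<times> real"
  assumes nc: "Wdet m0 m1 m2 \<noteq> 0"
begin

definition "p1 = fst m1 - fst m0"
definition "q1 = snd m1 - snd m0"
definition "p2 = fst m2 - fst m0"
definition "q2 = snd m2 - snd m0"
definition "WW = Wdet m0 m1 m2"
definition "cB = complex_of_real (p2^2 + q2^2)"
definition "cC = complex_of_real (p1^2 + q1^2)"
definition "cG = complex_of_real (p1*p2 + q1*q2)"
definition Al :: "complex \<Rightarrow> complex \<Rightarrow> complex" where "Al X Y = (X * of_real q2 - Y * of_real p2) / of_real WW"
definition Bl :: "complex \<Rightarrow> complex \<Rightarrow> complex" where "Bl X Y = (of_real p1 * Y - of_real q1 * X) / of_real WW"
definition a0 :: complex where "a0 = Al (- of_real (fst m0)) (- of_real (snd m0))"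
definition b0 :: complex where "b0 = Bl (- of_real (fst m0)) (- of_real (snd m0))"
definition "K0 = (cB * cC - cG^2)^2"
definition Psi :: "complex \<Rightarrow> complex \<Rightarrow> complex \<Rightarrow> complex" where "Psi X Y U = K0 * Gh (Al X Y + U * a0) (Bl X Y + U * b0) U cB cC cG"

lemma WW_eq: "WW = p1 * q2 - q1 * p2"
  unfolding WW_def Wdet_def wedge_def p1_def q1_def p2_def q2_def by simp

lemma WW_nz: "WW \<noteq> 0" using nc WW_def by simp

lemma WWc_nz: "complex_of_real WW \<noteq> 0" using WW_nz by simp

lemma K0_eq: "K0 = complex_of_real (WW^4)"
  unfolding K0_def cB_def cC_def cG_def WW_eq
  by (simp only: of_real_add of_real_mult of_real_diff of_real_power of_real_numeral
      flip: of_real_power) (simp add: algebra_simps; algebra)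


lemma nz_b: "p2^2 + q2^2 \<noteq> 0"
proof
  assume "p2^2 + q2^2 = 0"
  then have "p2 = 0" "q2 = 0" by (auto simp: add_nonneg_eq_0_iff)
  then show False using WW_nz WW_eq by simp
qed

lemma nz_c: "p1^2 + q1^2 \<noteq> 0"
proof
  assume "p1^2 + q1^2 = 0"
  then have "p1 = 0" "q1 = 0" by (auto simp: add_nonneg_eq_0_iff)
  then show False using WW_nz WW_eq by simp
qed

lemma nz_a: "(p1-p2)^2 + (q1-q2)^2 \<noteq> 0"
proof
  assume "(p1-p2)^2 + (q1-q2)^2 = 0"
  then have "p1 = p2" "q1 = q2" by (auto simp: add_nonneg_eq_0_iff)
  then show False using WW_nz WW_eq by (simp add: algebra_simps)
qed

lemma cA_eq: "cB + cC - 2*cG = complex_of_real ((p1-p2)^2 + (q1-q2)^2)"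
  unfolding cB_def cC_def cG_def by (simp add: power2_eq_square algebra_simps)

lemma K0_nz: "K0 \<noteq> 0" using K0_eq WW_nz by simp

lemma coords_gen:
  fixes Z Yw P1 Q1 P2 Q2 Wc :: complex
  assumes "Wc = P1*Q2 - Q1*P2" "Wc \<noteq> 0"
  shows "Z = ((Z*Q2 - Yw*P2)/Wc)*P1 + ((P1*Yw - Q1*Z)/Wc)*P2"
    and "Yw = ((Z*Q2 - Yw*P2)/Wc)*Q1 + ((P1*Yw - Q1*Z)/Wc)*Q2"
proof -
  have e1: "(Z*Q2 - Yw*P2)*P1 + (P1*Yw - Q1*Z)*P2 = Z*Wc" unfolding assms(1) by algebra
  have e2: "(Z*Q2 - Yw*P2)*Q1 + (P1*Yw - Q1*Z)*Q2 = Yw*Wc" unfolding assms(1) by algebra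
  have "((Z*Q2 - Yw*P2)/Wc)*P1 + ((P1*Yw - Q1*Z)/Wc)*P2 = ((Z*Q2 - Yw*P2)*P1 + (P1*Yw - Q1*Z)*P2)/Wc"
    by (simp add: add_divide_distrib)
  then show "Z = ((Z*Q2 - Yw*P2)/Wc)*P1 + ((P1*Yw - Q1*Z)/Wc)*P2" using e1 assms(2) by simp
  have "((Z*Q2 - Yw*P2)/Wc)*Q1 + ((P1*Yw - Q1*Z)/Wc)*Q2 = ((Z*Q2 - Yw*P2)*Q1 + (P1*Yw - Q1*Z)*Q2)/Wc"
    by (simp add: add_divide_distrib)
  then show "Yw = ((Z*Q2 - Yw*P2)/Wc)*Q1 + ((P1*Yw - Q1*Z)/Wc)*Q2" using e2 assms(2) by simp
qed

lemma WWc_eq: "complex_of_real WW = of_real p1 * of_real q2 - of_real q1 * of_real p2"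
  unfolding WW_eq by simp

lemma Al_a0: "Al z w + a0 = ((z - of_real (fst m0)) * of_real q2 - (w - of_real (snd m0)) * of_real p2) / of_real WW"
  unfolding Al_def a0_def by (rule frac_add) (simp add: algebra_simps)

lemma Bl_b0: "Bl z w + b0 = (of_real p1 * (w - of_real (snd m0)) - of_real q1 * (z - of_real (fst m0))) / of_real WW"
  unfolding Bl_def b0_def by (rule frac_add) (simp add: algebra_simps)

lemma coords:
  fixes z w :: complex
  shows "z - of_real (fst m0) = (Al z w + a0) * of_real p1 + (Bl z w + b0) * of_real p2"
    and "w - of_real (snd m0) = (Al z w + a0) * of_real q1 + (Bl z w + b0) * of_real q2"
  unfolding Al_a0 Bl_b0 by (rule coords_gen[OF WWc_eq WWc_nz])+

lemma bifFc_eq: "bifFc m0 m1 m2 z w = K0 * Gpoly (Al z w + a0) (Bl z w + b0) cB cC cG"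
proof -
  define al where "al = Al z w + a0"
  define be where "be = Bl z w + b0"
  have z: "z - of_real (fst m0) = al * of_real p1 + be * of_real p2"
   and w: "w - of_real (snd m0) = al * of_real q1 + be * of_real q2"
    using coords al_def be_def by auto
  have m1: "fst m1 = fst m0 + p1" "snd m1 = snd m0 + q1" unfolding p1_def q1_def by simp_all
  have m2: "fst m2 = fst m0 + p2" "snd m2 = snd m0 + q2" unfolding p2_def q2_def by simp_all
  have s0: "(z - of_real (fst m0))\<^sup>2 + (w - of_real (snd m0))\<^sup>2 = cC*al^2+2*cG*al*be+cB*be^2"
    unfolding z w cB_def cC_def cG_def by (simp add: algebra_simps power2_eq_square)
  have s1: "(z - of_real (fst m1))\<^sup>2 + (w - of_real (snd m1))\<^sup>2 = cC*(al-1)^2+2*cG*(al-1)*be+cB*be^2"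
  proof -
    have h1: "z - of_real (fst m1) = (al - 1) * of_real p1 + be * of_real p2"
      using z unfolding m1 by (simp add: algebra_simps)
    have h2: "w - of_real (snd m1) = (al - 1) * of_real q1 + be * of_real q2"
      using w unfolding m1 by (simp add: algebra_simps)
    show ?thesis unfolding h1 h2 cB_def cC_def cG_def by (simp add: algebra_simps power2_eq_square)
  qed
  have s2: "(z - of_real (fst m2))\<^sup>2 + (w - of_real (snd m2))\<^sup>2 = cC*al^2+2*cG*al*(be-1)+cB*(be-1)^2"
  proof -
    have h1: "z - of_real (fst m2) = al * of_real p1 + (be - 1) * of_real p2"
      using z unfolding m2 by (simp add: algebra_simps)
    have h2: "w - of_real (snd m2) = al * of_real q1 + (be - 1) * of_real q2"
      using w unfolding m2 by (simp add: algebra_simps)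
    show ?thesis unfolding h1 h2 cB_def cC_def cG_def by (simp add: algebra_simps power2_eq_square)
  qed
  have v0: "m1 - m2 = (p1 - p2, q1 - q2)" unfolding p1_def q1_def p2_def q2_def
    by (simp add: prod_eq_iff)
  have v1: "m2 - m0 = (p2, q2)" unfolding p2_def q2_def by (simp add: prod_eq_iff)
  have v2: "m0 - m1 = (- p1, - q1)" unfolding p1_def q1_def by (simp add: prod_eq_iff)
  have n0: "complex_of_real ((norm (m1 - m2))\<^sup>2) = cB + cC - 2*cG"
    unfolding cA_eq v0 by (simp add: norm_Pair)
  have n1: "complex_of_real ((norm (m2 - m0))\<^sup>2) = cB"
    unfolding cB_def v1 by (simp add: norm_Pair)
  have n2: "complex_of_real ((norm (m0 - m1))\<^sup>2) = cC"
    unfolding cC_def v2 by (simp add: norm_Pair)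
  have d01: "(m1 - m2) \<bullet> (m2 - m0) = p1*p2+q1*q2 - (p2^2+q2^2)"
    unfolding v0 v1 inner_pair_eq by (simp add: algebra_simps power2_eq_square)
  have d12: "(m2 - m0) \<bullet> (m0 - m1) = - (p1*p2+q1*q2)"
    unfolding v2 v1 inner_pair_eq by (simp add: algebra_simps)
  have d20: "(m0 - m1) \<bullet> (m1 - m2) = p1*p2+q1*q2 - (p1^2+q1^2)"
    unfolding v0 v2 inner_pair_eq by (simp add: algebra_simps power2_eq_square)
  have Wsq: "(complex_of_real (Wdet m0 m1 m2))\<^sup>2 = cB * cC - cG^2"
    unfolding WW_def[symmetric] WW_eq cB_def cC_def cG_def
    by (simp only: of_real_add of_real_mult of_real_diff of_real_power of_real_numeral
      flip: of_real_power) (simp add: algebra_simps; algebra)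
  have e01: "complex_of_real (((m1 - m2) \<bullet> (m2 - m0))\<^sup>2) = (cG - cB)^2"
    by (simp add: d01 cG_def cB_def)
  have e12: "complex_of_real (((m2 - m0) \<bullet> (m0 - m1))\<^sup>2) = (- cG)^2"
    by (simp add: d12 cG_def)
  have e20: "complex_of_real (((m0 - m1) \<bullet> (m1 - m2))\<^sup>2) = (cG - cC)^2"
    by (simp add: d20 cG_def cC_def)
  have e3: "complex_of_real ((m1 - m2) \<bullet> (m2 - m0) * ((m2 - m0) \<bullet> (m0 - m1)) *
       ((m0 - m1) \<bullet> (m1 - m2))) = (cG - cB) * - cG * (cG - cC)"
    by (simp add: d01 d12 d20 cG_def cB_def cC_def)
  show ?thesis
    unfolding bifFc_def Let_def K0_def al_def[symmetric] be_def[symmetric]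
    apply (rule key)
    unfolding s0 s1 s2 n0 n1 n2 Wsq e01 e12 e20 e3
    by (rule refl)+
qed


lemma Al_div: "Al (X / t) (Y / t) = Al X Y / t"
proof -
  have "(X/t) * of_real q2 - (Y/t) * of_real p2 = (X * of_real q2 - Y * of_real p2)/t"
    by (simp add: diff_divide_distrib)
  then show ?thesis unfolding Al_def by (simp add: divide_divide_eq_left mult.commute)
qed

lemma Bl_div: "Bl (X / t) (Y / t) = Bl X Y / t"
proof -
  have "of_real p1 * (Y/t) - of_real q1 * (X/t) = (of_real p1 * Y - of_real q1 * X)/t"
    by (simp add: diff_divide_distrib)
  then show ?thesis unfolding Bl_def by (simp add: divide_divide_eq_left mult.commute)
qed

lemma Al_scale: "t \<noteq> 0 \<Longrightarrow> Al (X / t) (Y / t) + a0 = (Al X Y + t * a0) / t"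
  unfolding Al_div by (simp add: field_simps)

lemma Bl_scale: "t \<noteq> 0 \<Longrightarrow> Bl (X / t) (Y / t) + b0 = (Bl X Y + t * b0) / t"
  unfolding Bl_div by (simp add: field_simps)

lemma hom: "t \<noteq> 0 \<Longrightarrow> t^5 * bifFc m0 m1 m2 (X / t) (Y / t) = Psi X Y t"
proof -
  assume t: "t \<noteq> 0"
  have "Psi X Y t = K0 * Gh (t * ((Al X Y + t * a0) / t)) (t * ((Bl X Y + t * b0) / t)) t cB cC cG"
    unfolding Psi_def using t by simp
  also have "\<dots> = K0 * (t^5 * Gpoly ((Al X Y + t * a0) / t) ((Bl X Y + t * b0) / t) cB cC cG)"
    by (simp only: Gh_hom)
  finally show ?thesis unfolding bifFc_eq Al_scale[OF t] Bl_scale[OF t] by simp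
qed

lemma affine_deriv: "((\<lambda>s. C + s * D) has_field_derivative (D::complex)) (at t)"
  by (auto intro!: derivative_eq_intros)

lemma Al_lin: "Al (X + s * dx) (Y + s * dy) = Al X Y + s * Al dx dy"
  unfolding Al_def using WW_nz by (simp add: field_simps)

lemma Bl_lin: "Bl (X + s * dx) (Y + s * dy) = Bl X Y + s * Bl dx dy"
  unfolding Bl_def using WW_nz by (simp add: field_simps)

lemma Al_deriv: "((\<lambda>s. Al (X0 + s * dx) (Y0 + s * dy) + (U0 + s * du) * a0) has_field_derivative
    (Al dx dy + du * a0)) (at t)"
proof -
  have "(\<lambda>s. Al (X0 + s * dx) (Y0 + s * dy) + (U0 + s * du) * a0) = (\<lambda>s. (Al X0 Y0 + U0 * a0) + s * (Al dx dy + du * a0))"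
    unfolding Al_lin by (simp add: algebra_simps)
  then show ?thesis using affine_deriv by simp
qed

lemma Bl_deriv: "((\<lambda>s. Bl (X0 + s * dx) (Y0 + s * dy) + (U0 + s * du) * b0) has_field_derivative
    (Bl dx dy + du * b0)) (at t)"
proof -
  have "(\<lambda>s. Bl (X0 + s * dx) (Y0 + s * dy) + (U0 + s * du) * b0) = (\<lambda>s. (Bl X0 Y0 + U0 * b0) + s * (Bl dx dy + du * b0))"
    unfolding Bl_lin by (simp add: algebra_simps)
  then show ?thesis using affine_deriv by simp
qed

lemma Psi_deriv: "((\<lambda>s. Psi (X0 + s * dx) (Y0 + s * dy) (U0 + s * du)) has_field_derivative
    K0 * ((Al dx dy + du * a0) * GhA (Al (X0 + t*dx) (Y0 + t*dy) + (U0 + t*du) * a0)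
            (Bl (X0 + t*dx) (Y0 + t*dy) + (U0 + t*du) * b0) (U0 + t*du) cB cC cG
        + (Bl dx dy + du * b0) * GhB (Al (X0 + t*dx) (Y0 + t*dy) + (U0 + t*du) * a0)
            (Bl (X0 + t*dx) (Y0 + t*dy) + (U0 + t*du) * b0) (U0 + t*du) cB cC cG
        + du * GhU (Al (X0 + t*dx) (Y0 + t*dy) + (U0 + t*du) * a0)
            (Bl (X0 + t*dx) (Y0 + t*dy) + (U0 + t*du) * b0) (U0 + t*du) cB cC cG)) (at t)"
  unfolding Psi_def
  apply (rule DERIV_cmult)
  apply (rule Gh_deriv[OF Al_deriv Bl_deriv])
  by (rule affine_deriv)

lemma Psi_cont: "isCont (\<lambda>t. Psi X Y t) 0"
proof -
  have "isCont (\<lambda>s. Psi (X + s * 0) (Y + s * 0) (0 + s * 1)) 0"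
    by (rule DERIV_isCont[OF Psi_deriv])
  then show ?thesis by simp
qed

lemma lim_Psi: "((\<lambda>t. t ^ 5 * bifFc m0 m1 m2 (X / t) (Y / t)) \<longlongrightarrow> Psi X Y 0) (at 0)"
proof -
  have "((\<lambda>t. Psi X Y t) \<longlongrightarrow> Psi X Y 0) (at 0)"
    using Psi_cont by (simp add: isCont_def)
  moreover have "\<forall>\<^sub>F t in at 0. Psi X Y t = t ^ 5 * bifFc m0 m1 m2 (X / t) (Y / t)"
    by (auto simp: eventually_at_filter hom)
  ultimately show ?thesis by (rule Lim_transform_eventually)
qed

lemma bifFh_eq: "bifFh m0 m1 m2 X Y U = Psi X Y U"
proof (cases "U = 0")
  case True
  then show ?thesis unfolding bifFh_def
    using tendsto_Lim[OF _ lim_Psi] by simp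
next
  case False
  then show ?thesis unfolding bifFh_def using hom by simp
qed

lemma ideal_iff: "is_ideal_point m0 m1 m2 X Y \<longleftrightarrow> (X, Y) \<noteq> (0, 0) \<and> Psi X Y 0 = 0"
proof -
  have "((\<lambda>t. t ^ 5 * bifFc m0 m1 m2 (X / t) (Y / t)) \<longlongrightarrow> 0) (at 0) \<longleftrightarrow> Psi X Y 0 = 0"
  proof
    assume "((\<lambda>t. t ^ 5 * bifFc m0 m1 m2 (X / t) (Y / t)) \<longlongrightarrow> 0) (at 0)"
    then show "Psi X Y 0 = 0" using tendsto_unique[OF _ lim_Psi] by fastforce
  next
    assume "Psi X Y 0 = 0"
    then show "((\<lambda>t. t ^ 5 * bifFc m0 m1 m2 (X / t) (Y / t)) \<longlongrightarrow> 0) (at 0)"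
      using lim_Psi[of X Y] by simp
  qed
  then show ?thesis unfolding is_ideal_point_def by simp
qed

lemma quad_eq: "cC * (Al X Y)^2 + 2 * cG * Al X Y * Bl X Y + cB * (Bl X Y)^2 = X^2 + Y^2"
proof -
  have "X = Al X Y * of_real p1 + Bl X Y * of_real p2" "Y = Al X Y * of_real q1 + Bl X Y * of_real q2"
    unfolding Al_def Bl_def by (rule coords_gen[OF WWc_eq WWc_nz])+
  then have "X^2 + Y^2 = (Al X Y * of_real p1 + Bl X Y * of_real p2)^2 + (Al X Y * of_real q1 + Bl X Y * of_real q2)^2"
    by simp
  also have "\<dots> = cC * (Al X Y)^2 + 2 * cG * Al X Y * Bl X Y + cB * (Bl X Y)^2"
    unfolding cB_def cC_def cG_def by (simp add: algebra_simps power2_eq_square)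
  finally show ?thesis by simp
qed

lemma Psi0: "Psi X Y 0 = K0 * (-64 * (cB + cC - 2*cG) * cB * cC) * (Al X Y * Bl X Y * (Al X Y + Bl X Y) * (X^2 + Y^2))"
proof -
  have "Psi X Y 0 = K0 * Gh (Al X Y) (Bl X Y) 0 cB cC cG" unfolding Psi_def by simp
  also have "\<dots> = K0 * (-64*(cB+cC-2*cG)*cB*cC*Al X Y*Bl X Y*(Al X Y+Bl X Y)*(cC*(Al X Y)^2+2*cG*Al X Y*Bl X Y+cB*(Bl X Y)^2))"
    by (simp only: Gh_top)
  also have "\<dots> = K0 * (-64 * (cB + cC - 2*cG) * cB * cC) * (Al X Y * Bl X Y * (Al X Y + Bl X Y) * (X^2 + Y^2))"
    unfolding quad_eq by (simp only: mult.assoc)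
  finally show ?thesis .
qed

lemma cA_nz: "cB + cC - 2*cG \<noteq> 0" unfolding cA_eq of_real_eq_0_iff by (rule nz_a)
lemma cB_nz: "cB \<noteq> 0" unfolding cB_def of_real_eq_0_iff by (rule nz_b)
lemma cC_nz: "cC \<noteq> 0" unfolding cC_def of_real_eq_0_iff by (rule nz_c)

lemma coefs_nz: "K0 * (-64 * (cB + cC - 2*cG) * cB * cC) \<noteq> 0"
  using K0_nz cA_nz cB_nz cC_nz by (simp only: mult_eq_0_iff) simp


lemma m_coords: "fst m1 - fst m2 = p1 - p2" "snd m1 - snd m2 = q1 - q2"
   "fst m2 - fst m0 = p2" "snd m2 - snd m0 = q2" "fst m0 - fst m1 = - p1" "snd m0 - snd m1 = - q1"
  unfolding p1_def q1_def p2_def q2_def by simp_all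

lemma Al_zero_iff: "Al X Y = 0 \<longleftrightarrow> X * of_real q2 = Y * of_real p2"
  unfolding Al_def using WWc_nz by simp

lemma Bl_zero_iff: "Bl X Y = 0 \<longleftrightarrow> X * of_real (- q1) = Y * of_real (- p1)"
  unfolding Bl_def using WWc_nz by (auto simp: algebra_simps)

lemma AlBl_zero_iff: "Al X Y + Bl X Y = 0 \<longleftrightarrow> X * of_real (q1 - q2) = Y * of_real (p1 - p2)"
proof -
  have "Al X Y + Bl X Y = ((X * of_real q2 - Y * of_real p2) + (of_real p1 * Y - of_real q1 * X)) / of_real WW"
    unfolding Al_def Bl_def by (simp add: add_divide_distrib)
  then show ?thesis using WWc_nz by (auto simp: algebra_simps)
qed

lemma iso_zero_iff: "X^2 + Y^2 = 0 \<longleftrightarrow> X * \<i> = Y * 1 \<or> X * (- \<i>) = Y * 1"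
proof -
  have "X^2 + Y^2 = (Y - X * \<i>) * (Y + X * \<i>)" by (simp add: algebra_simps power2_eq_square)
  then have e: "X^2 + Y^2 = 0 \<longleftrightarrow> Y - X * \<i> = 0 \<or> Y + X * \<i> = 0" by simp
  have a: "Y - X * \<i> = 0 \<longleftrightarrow> X * \<i> = Y * 1" by auto
  have b: "Y + X * \<i> = 0 \<longleftrightarrow> X * (- \<i>) = Y * 1"
    by (metis add.commute add_eq_0_iff mult_1_right mult_minus_right)
  show ?thesis unfolding e a b ..
qed

lemma ideal_char: "is_ideal_point m0 m1 m2 X Y \<longleftrightarrow>
            same_ideal X Y (of_real (fst m1 - fst m2)) (of_real (snd m1 - snd m2)) \<or>
            same_ideal X Y (of_real (fst m2 - fst m0)) (of_real (snd m2 - snd m0)) \<or>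
            same_ideal X Y (of_real (fst m0 - fst m1)) (of_real (snd m0 - snd m1)) \<or>
            same_ideal X Y 1 \<i> \<or>
            same_ideal X Y 1 (- \<i>)"
proof -
  have n1: "(complex_of_real (p1 - p2), complex_of_real (q1 - q2)) \<noteq> (0, 0)"
    using nz_a by auto
  have n2: "(complex_of_real p2, complex_of_real q2) \<noteq> (0, 0)"
    using nz_b by auto
  have n3: "(complex_of_real (- p1), complex_of_real (- q1)) \<noteq> (0, 0)"
    using nz_c by auto
  have n4: "(1::complex, \<i>) \<noteq> (0, 0)" "(1::complex, - \<i>) \<noteq> (0, 0)" by auto
  show ?thesis
    unfolding m_coords same_ideal_iff[OF n1] same_ideal_iff[OF n2] same_ideal_iff[OF n3]
      same_ideal_iff[OF n4(1)] same_ideal_iff[OF n4(2)] ideal_iff Psi0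
    using coefs_nz
    by (auto simp only: mult_eq_0_iff Al_zero_iff Bl_zero_iff AlBl_zero_iff iso_zero_iff)
qed

lemma Al_10: "Al 1 0 = of_real q2 / of_real WW" unfolding Al_def by simp
lemma Al_01: "Al 0 1 = - of_real p2 / of_real WW" unfolding Al_def by simp
lemma Bl_10: "Bl 1 0 = - of_real q1 / of_real WW" unfolding Bl_def by simp
lemma Bl_01: "Bl 0 1 = of_real p1 / of_real WW" unfolding Bl_def by simp
lemma Al_00: "Al 0 0 = 0" unfolding Al_def by simp
lemma Bl_00: "Bl 0 0 = 0" unfolding Bl_def by simp

lemma gradX: "deriv (\<lambda>s. bifFh m0 m1 m2 s Y U) X =
   K0 * (Al 1 0 * GhA (Al X Y + U * a0) (Bl X Y + U * b0) U cB cC cG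
       + Bl 1 0 * GhB (Al X Y + U * a0) (Bl X Y + U * b0) U cB cC cG)"
proof -
  have f: "(\<lambda>s. bifFh m0 m1 m2 s Y U) = (\<lambda>s. Psi (0 + s * 1) (Y + s * 0) (U + s * 0))"
    by (simp add: bifFh_eq)
  show ?thesis unfolding f using DERIV_imp_deriv[OF Psi_deriv, of 0 1 Y 0 U 0 X] by simp
qed

lemma gradY: "deriv (\<lambda>s. bifFh m0 m1 m2 X s U) Y =
   K0 * (Al 0 1 * GhA (Al X Y + U * a0) (Bl X Y + U * b0) U cB cC cG
       + Bl 0 1 * GhB (Al X Y + U * a0) (Bl X Y + U * b0) U cB cC cG)"
proof -
  have f: "(\<lambda>s. bifFh m0 m1 m2 X s U) = (\<lambda>s. Psi (X + s * 0) (0 + s * 1) (U + s * 0))"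
    by (simp add: bifFh_eq)
  show ?thesis unfolding f using DERIV_imp_deriv[OF Psi_deriv, of X 0 0 1 U 0 Y] by simp
qed

lemma gradU: "deriv (\<lambda>s. bifFh m0 m1 m2 X Y s) U =
   K0 * (a0 * GhA (Al X Y + U * a0) (Bl X Y + U * b0) U cB cC cG
       + b0 * GhB (Al X Y + U * a0) (Bl X Y + U * b0) U cB cC cG
       + GhU (Al X Y + U * a0) (Bl X Y + U * b0) U cB cC cG)"
proof -
  have f: "(\<lambda>s. bifFh m0 m1 m2 X Y s) = (\<lambda>s. Psi (X + s * 0) (Y + s * 0) (0 + s * 1))"
    by (simp add: bifFh_eq)
  show ?thesis unfolding f using DERIV_imp_deriv[OF Psi_deriv, of X 0 Y 0 0 1 U] by (simp add: Al_00 Bl_00)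
qed

lemma Al_real: "Al (of_real x) (of_real y) + a0 = of_real (((x - fst m0) * q2 - (y - snd m0) * p2) / WW)"
  unfolding Al_a0 by simp

lemma Bl_real: "Bl (of_real x) (of_real y) + b0 = of_real ((p1 * (y - snd m0) - q1 * (x - fst m0)) / WW)"
  unfolding Bl_b0 by simp

lemma Al_lin2: "Al x y = x * Al 1 0 + y * Al 0 1"
  unfolding Al_def by (simp add: algebra_simps diff_divide_distrib)

lemma Bl_lin2: "Bl x y = x * Bl 1 0 + y * Bl 0 1"
  unfolding Bl_def by (simp add: algebra_simps diff_divide_distrib)

lemma tangent_gen: "tangent_affine m0 m1 m2 X Y 0 =
   {p. K0 * (GhA (Al X Y) (Bl X Y) 0 cB cC cG * (Al (of_real (fst p)) (of_real (snd p)) + a0)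
           + GhB (Al X Y) (Bl X Y) 0 cB cC cG * (Bl (of_real (fst p)) (of_real (snd p)) + b0)
           + GhU (Al X Y) (Bl X Y) 0 cB cC cG) = 0}"
proof -
  have "\<And>x y. K0 * (Al 1 0 * GhA (Al X Y) (Bl X Y) 0 cB cC cG + Bl 1 0 * GhB (Al X Y) (Bl X Y) 0 cB cC cG) * x
      + K0 * (Al 0 1 * GhA (Al X Y) (Bl X Y) 0 cB cC cG + Bl 0 1 * GhB (Al X Y) (Bl X Y) 0 cB cC cG) * y
      + K0 * (a0 * GhA (Al X Y) (Bl X Y) 0 cB cC cG + b0 * GhB (Al X Y) (Bl X Y) 0 cB cC cG + GhU (Al X Y) (Bl X Y) 0 cB cC cG)
      = K0 * (GhA (Al X Y) (Bl X Y) 0 cB cC cG * (Al x y + a0)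
           + GhB (Al X Y) (Bl X Y) 0 cB cC cG * (Bl x y + b0)
           + GhU (Al X Y) (Bl X Y) 0 cB cC cG)"
    by (subst (2) Al_lin2, subst (2) Bl_lin2) (simp add: algebra_simps)
  then show ?thesis
    unfolding tangent_affine_def gradFh_def gradX gradY gradU by simp
qed

lemma WWc_num: "complex_of_real p1 * of_real q2 - of_real q1 * of_real p2 = of_real WW"
  using WWc_eq by simp

lemma pt1: "Al (of_real (p1 - p2)) (of_real (q1 - q2)) = 1" "Bl (of_real (p1 - p2)) (of_real (q1 - q2)) = -1"
proof -
  have "of_real (p1 - p2) * of_real q2 - of_real (q1 - q2) * of_real p2 = complex_of_real WW"
    unfolding WWc_num[symmetric] by (simp add: algebra_simps)
  then show "Al (of_real (p1 - p2)) (of_real (q1 - q2)) = 1" unfolding Al_def using WWc_nz by simp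
  have "of_real p1 * of_real (q1 - q2) - of_real q1 * of_real (p1 - p2) = - complex_of_real WW"
    unfolding WWc_num[symmetric] by (simp add: algebra_simps)
  then show "Bl (of_real (p1 - p2)) (of_real (q1 - q2)) = -1" unfolding Bl_def using WWc_nz by simp
qed

lemma pt2: "Al (of_real p2) (of_real q2) = 0" "Bl (of_real p2) (of_real q2) = 1"
proof -
  show "Al (of_real p2) (of_real q2) = 0" unfolding Al_def by (simp add: algebra_simps)
  show "Bl (of_real p2) (of_real q2) = 1" unfolding Bl_def WWc_num[symmetric] using WWc_nz WWc_num
    by (simp add: algebra_simps)
qed

lemma pt3: "Al (of_real (- p1)) (of_real (- q1)) = -1" "Bl (of_real (- p1)) (of_real (- q1)) = 0"
proof -
  have "of_real (- p1) * of_real q2 - of_real (- q1) * of_real p2 = - complex_of_real WW"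
    unfolding WWc_num[symmetric] by (simp add: algebra_simps)
  then show "Al (of_real (- p1)) (of_real (- q1)) = -1" unfolding Al_def using WWc_nz by simp
  show "Bl (of_real (- p1)) (of_real (- q1)) = 0" unfolding Bl_def by (simp add: algebra_simps)
qed

lemma same_ideal_refl: "same_ideal X Y X Y"
  unfolding same_ideal_def by (rule exI[of _ 1]) simp

lemma grad0:
  "gradFh m0 m1 m2 X Y 0 = (K0 * (of_real q2 / of_real WW * GhA (Al X Y) (Bl X Y) 0 cB cC cG
       - of_real q1 / of_real WW * GhB (Al X Y) (Bl X Y) 0 cB cC cG),
     K0 * (- of_real p2 / of_real WW * GhA (Al X Y) (Bl X Y) 0 cB cC cG
       + of_real p1 / of_real WW * GhB (Al X Y) (Bl X Y) 0 cB cC cG),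
     K0 * (a0 * GhA (Al X Y) (Bl X Y) 0 cB cC cG + b0 * GhB (Al X Y) (Bl X Y) 0 cB cC cG
       + GhU (Al X Y) (Bl X Y) 0 cB cC cG))"
  unfolding gradFh_def gradX gradY gradU Al_10 Al_01 Bl_10 Bl_01 by simp

lemma Anz: "(cB + cC - 2*cG)^2 * cB * cC \<noteq> 0" "(cB + cC - 2*cG) * cB^2 * cC \<noteq> 0"
   "(cB + cC - 2*cG) * cB * cC^2 \<noteq> 0"
  using cA_nz cB_nz cC_nz by simp_all

lemma real_zero_cancel:
  assumes "K \<noteq> 0" "z = complex_of_real r"
  shows "K * z = 0 \<longleftrightarrow> r = 0"
  using assms by simp

lemma asym1: "is_asymptote_at m0 m1 m2 (of_real (p1 - p2)) (of_real (q1 - q2))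
   {x. 4 * wedge (m1 - m2) (x - m0) - 3 * WW = 0}"
  unfolding is_asymptote_at_def
proof (intro conjI)
  show "is_ideal_point m0 m1 m2 (complex_of_real (p1 - p2)) (complex_of_real (q1 - q2))"
    unfolding ideal_char m_coords using same_ideal_refl by blast
  let ?M = "(cB + cC - 2*cG)^2 * cB * cC"
  have g: "gradFh m0 m1 m2 (of_real (p1 - p2)) (of_real (q1 - q2)) 0 =
     (K0 * (64 * ?M) * of_real (q2 - q1) / of_real WW, K0 * (64 * ?M) * of_real (p1 - p2) / of_real WW,
      K0 * (a0 * (64 * ?M) + b0 * (64 * ?M) - 48 * ?M))"
    unfolding grad0 pt1 GhP1 by (simp add: algebra_simps diff_divide_distrib add_divide_distrib)
  show "smooth_point m0 m1 m2 (complex_of_real (p1 - p2)) (complex_of_real (q1 - q2)) 0"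
    unfolding smooth_point_def
  proof
    show "bifFh m0 m1 m2 (complex_of_real (p1 - p2)) (complex_of_real (q1 - q2)) 0 = 0"
      unfolding bifFh_eq Psi0 pt1 by simp
    show "gradFh m0 m1 m2 (complex_of_real (p1 - p2)) (complex_of_real (q1 - q2)) 0 \<noteq> (0, 0, 0)"
      unfolding g using K0_nz Anz(1) WWc_nz nz_a by auto
  qed
  have key: "(4 * wedge (m1 - m2) (x - m0) - 3 * WW = 0) \<longleftrightarrow>
       K0 * (64 * ?M * (Al (of_real (fst x)) (of_real (snd x)) + a0) +
          64 * ?M * (Bl (of_real (fst x)) (of_real (snd x)) + b0) + - 48 * ?M) = 0" for x
  proof -
    have w: "wedge (m1 - m2) (x - m0) = (p1 - p2) * (snd x - snd m0) - (q1 - q2) * (fst x - fst m0)"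
      unfolding wedge_def p1_def p2_def q1_def q2_def by simp
    have r: "4 * ((((fst x - fst m0) * q2 - (snd x - snd m0) * p2) / WW) + ((p1 * (snd x - snd m0) - q1 * (fst x - fst m0)) / WW)) - 3
          = (4 * wedge (m1 - m2) (x - m0) - 3 * WW) / WW"
      unfolding w using WW_nz by (simp add: field_simps)
    have hs: "64 * ?M * (Al (of_real (fst x)) (of_real (snd x)) + a0) +
          64 * ?M * (Bl (of_real (fst x)) (of_real (snd x)) + b0) + - 48 * ?M =
          16 * ?M * of_real ((4 * wedge (m1 - m2) (x - m0) - 3 * WW) / WW)"
      unfolding Al_real Bl_real r[symmetric] by (simp add: algebra_simps)
    have "K0 * (64 * ?M * (Al (of_real (fst x)) (of_real (snd x)) + a0) +
          64 * ?M * (Bl (of_real (fst x)) (of_real (snd x)) + b0) + - 48 * ?M) = 0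
        \<longleftrightarrow> (4 * wedge (m1 - m2) (x - m0) - 3 * WW) / WW = 0"
      unfolding hs mult_eq_0_iff of_real_eq_0_iff using K0_nz Anz(1) by simp
    then show "(4 * wedge (m1 - m2) (x - m0) - 3 * WW = 0) \<longleftrightarrow>
       K0 * (64 * ?M * (Al (of_real (fst x)) (of_real (snd x)) + a0) +
          64 * ?M * (Bl (of_real (fst x)) (of_real (snd x)) + b0) + - 48 * ?M) = 0"
      using WW_nz by simp
  qed
  show "{x. 4 * wedge (m1 - m2) (x - m0) - 3 * WW = 0} =
      tangent_affine m0 m1 m2 (complex_of_real (p1 - p2)) (complex_of_real (q1 - q2)) 0"
    unfolding tangent_gen pt1 GhP1 using key by (simp add: mult.assoc)
qed

lemma asym2: "is_asymptote_at m0 m1 m2 (of_real p2) (of_real q2)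
   {x. 4 * wedge (m2 - m0) (x - m1) - 3 * WW = 0}"
  unfolding is_asymptote_at_def
proof (intro conjI)
  show "is_ideal_point m0 m1 m2 (complex_of_real p2) (complex_of_real q2)"
    unfolding ideal_char m_coords using same_ideal_refl by blast
  let ?N = "(cB + cC - 2*cG) * cB^2 * cC"
  have g: "gradFh m0 m1 m2 (of_real p2) (of_real q2) 0 =
     (- (K0 * (64 * ?N) * of_real q2 / of_real WW), K0 * (64 * ?N) * of_real p2 / of_real WW,
      K0 * (a0 * (- 64 * ?N) + 16 * ?N))"
    unfolding grad0 pt2 GhP2 by (simp add: algebra_simps diff_divide_distrib add_divide_distrib)
  show "smooth_point m0 m1 m2 (complex_of_real p2) (complex_of_real q2) 0"
    unfolding smooth_point_def
  proof
    show "bifFh m0 m1 m2 (complex_of_real p2) (complex_of_real q2) 0 = 0"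
      unfolding bifFh_eq Psi0 pt2 by simp
    show "gradFh m0 m1 m2 (complex_of_real p2) (complex_of_real q2) 0 \<noteq> (0, 0, 0)"
      unfolding g using K0_nz Anz(2) WWc_nz nz_b by auto
  qed
  have key: "(4 * wedge (m2 - m0) (x - m1) - 3 * WW = 0) \<longleftrightarrow>
       K0 * (-64*(cB + cC - 2*cG)*cB^2*cC * (Al (of_real (fst x)) (of_real (snd x)) + a0) + 0 * (Bl (of_real (fst x)) (of_real (snd x)) + b0) + 16*(cB + cC - 2*cG)*cB^2*cC) = 0" for x
  proof -
    have w: "wedge (m2 - m0) (x - m1) = p2 * (snd x - snd m0 - q1) - q2 * (fst x - fst m0 - p1)"
      unfolding wedge_def p1_def p2_def q1_def q2_def by simp
    have r: "1 - 4 * (((fst x - fst m0) * q2 - (snd x - snd m0) * p2) / WW)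
          = (4 * wedge (m2 - m0) (x - m1) - 3 * WW) / WW"
      unfolding w using WW_nz by (simp add: field_simps WW_eq)
    define t where "t = ((fst x - fst m0) * q2 - (snd x - snd m0) * p2) / WW"
    have hs: "-64*(cB + cC - 2*cG)*cB^2*cC * (Al (of_real (fst x)) (of_real (snd x)) + a0) + 0 * (Bl (of_real (fst x)) (of_real (snd x)) + b0) + 16*(cB + cC - 2*cG)*cB^2*cC =
          16 * ?N * of_real ((4 * wedge (m2 - m0) (x - m1) - 3 * WW) / WW)"
      unfolding Al_real r[symmetric] t_def[symmetric] by (simp add: algebra_simps)
    have "K0 * (-64*(cB + cC - 2*cG)*cB^2*cC * (Al (of_real (fst x)) (of_real (snd x)) + a0) + 0 * (Bl (of_real (fst x)) (of_real (snd x)) + b0) + 16*(cB + cC - 2*cG)*cB^2*cC) = 0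
        \<longleftrightarrow> (4 * wedge (m2 - m0) (x - m1) - 3 * WW) / WW = 0"
      unfolding hs mult_eq_0_iff of_real_eq_0_iff using K0_nz Anz(2) by simp
    then show ?thesis using WW_nz by simp
  qed
  show "{x. 4 * wedge (m2 - m0) (x - m1) - 3 * WW = 0} =
      tangent_affine m0 m1 m2 (complex_of_real p2) (complex_of_real q2) 0"
    unfolding tangent_gen pt2 GhP2 set_eq_iff mem_Collect_eq key by (rule allI) (rule refl)
qed

lemma asym3: "is_asymptote_at m0 m1 m2 (of_real (- p1)) (of_real (- q1))
   {x. 4 * wedge (m0 - m1) (x - m2) - 3 * WW = 0}"
  unfolding is_asymptote_at_def
proof (intro conjI)
  show "is_ideal_point m0 m1 m2 (complex_of_real (- p1)) (complex_of_real (- q1))"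
    unfolding ideal_char m_coords using same_ideal_refl by blast
  let ?N = "(cB + cC - 2*cG) * cB * cC^2"
  have g: "gradFh m0 m1 m2 (of_real (- p1)) (of_real (- q1)) 0 =
     (K0 * (64 * ?N) * of_real q1 / of_real WW, - (K0 * (64 * ?N) * of_real p1 / of_real WW),
      K0 * (b0 * (- 64 * ?N) + 16 * ?N))"
    unfolding grad0 pt3 GhP3 by (simp add: algebra_simps diff_divide_distrib add_divide_distrib)
  show "smooth_point m0 m1 m2 (complex_of_real (- p1)) (complex_of_real (- q1)) 0"
    unfolding smooth_point_def
  proof
    show "bifFh m0 m1 m2 (complex_of_real (- p1)) (complex_of_real (- q1)) 0 = 0"
      unfolding bifFh_eq Psi0 pt3 by simp
    show "gradFh m0 m1 m2 (complex_of_real (- p1)) (complex_of_real (- q1)) 0 \<noteq> (0, 0, 0)"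
      unfolding g using K0_nz Anz(3) WWc_nz nz_c by auto
  qed
  have key: "(4 * wedge (m0 - m1) (x - m2) - 3 * WW = 0) \<longleftrightarrow>
       K0 * (0 * (Al (of_real (fst x)) (of_real (snd x)) + a0) + -64*(cB + cC - 2*cG)*cB*cC^2 * (Bl (of_real (fst x)) (of_real (snd x)) + b0) + 16*(cB + cC - 2*cG)*cB*cC^2) = 0" for x
  proof -
    have w: "wedge (m0 - m1) (x - m2) = - p1 * (snd x - snd m0 - q2) + q1 * (fst x - fst m0 - p2)"
      unfolding wedge_def p1_def p2_def q1_def q2_def by (simp add: algebra_simps)
    have r: "1 - 4 * ((p1 * (snd x - snd m0) - q1 * (fst x - fst m0)) / WW)
          = (4 * wedge (m0 - m1) (x - m2) - 3 * WW) / WW"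
      unfolding w using WW_nz by (simp add: field_simps WW_eq)
    define t where "t = (p1 * (snd x - snd m0) - q1 * (fst x - fst m0)) / WW"
    have hs: "0 * (Al (of_real (fst x)) (of_real (snd x)) + a0) + -64*(cB + cC - 2*cG)*cB*cC^2 * (Bl (of_real (fst x)) (of_real (snd x)) + b0) + 16*(cB + cC - 2*cG)*cB*cC^2 =
          16 * ?N * of_real ((4 * wedge (m0 - m1) (x - m2) - 3 * WW) / WW)"
      unfolding Bl_real r[symmetric] t_def[symmetric] by (simp add: algebra_simps)
    have "K0 * (0 * (Al (of_real (fst x)) (of_real (snd x)) + a0) + -64*(cB + cC - 2*cG)*cB*cC^2 * (Bl (of_real (fst x)) (of_real (snd x)) + b0) + 16*(cB + cC - 2*cG)*cB*cC^2) = 0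
        \<longleftrightarrow> (4 * wedge (m0 - m1) (x - m2) - 3 * WW) / WW = 0"
      unfolding hs mult_eq_0_iff of_real_eq_0_iff using K0_nz Anz(3) by simp
    then show ?thesis using WW_nz by simp
  qed
  show "{x. 4 * wedge (m0 - m1) (x - m2) - 3 * WW = 0} =
      tangent_affine m0 m1 m2 (complex_of_real (- p1)) (complex_of_real (- q1)) 0"
    unfolding tangent_gen pt3 GhP3 set_eq_iff mem_Collect_eq key by (rule allI) (rule refl)
qed

lemma lines_disjoint: "{x. 4 * wedge (m1 - m2) (x - m0) - 3 * WW = 0} \<inter>
    {x. 4 * wedge (m2 - m0) (x - m1) - 3 * WW = 0} \<inter> {x. 4 * wedge (m0 - m1) (x - m2) - 3 * WW = 0} = {}"
proof -
  have s: "wedge (m1 - m2) (x - m0) + wedge (m2 - m0) (x - m1) + wedge (m0 - m1) (x - m2) = 2 * WW" for x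
    unfolding WW_def wedge_def Wdet_def fst_diff snd_diff by algebra
  show ?thesis
  proof (rule ccontr)
    assume "\<not> ?thesis"
    then obtain x where "4 * wedge (m1 - m2) (x - m0) - 3 * WW = 0" "4 * wedge (m2 - m0) (x - m1) - 3 * WW = 0"
       "4 * wedge (m0 - m1) (x - m2) - 3 * WW = 0" by blast
    with s[of x] WW_nz show False by linarith
  qed
qed

end

theorem mainTheorem3:
  fixes m0 m1 m2 :: "real \<times> real"
  assumes noncollinear: "Wdet m0 m1 m2 \<noteq> 0"
  defines "W \<equiv> Wdet m0 m1 m2"
  defines "L0 \<equiv> {x. 4 * wedge (m1 - m2) (x - m0) - 3 * W = 0}"
      and "L1 \<equiv> {x. 4 * wedge (m2 - m0) (x - m1) - 3 * W = 0}"
      and "L2 \<equiv> {x. 4 * wedge (m0 - m1) (x - m2) - 3 * W = 0}"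
  shows "(\<forall>X Y. is_ideal_point m0 m1 m2 X Y \<longleftrightarrow>
            same_ideal X Y (of_real (fst m1 - fst m2)) (of_real (snd m1 - snd m2)) \<or>
            same_ideal X Y (of_real (fst m2 - fst m0)) (of_real (snd m2 - snd m0)) \<or>
            same_ideal X Y (of_real (fst m0 - fst m1)) (of_real (snd m0 - snd m1)) \<or>
            same_ideal X Y 1 \<i> \<or>
            same_ideal X Y 1 (- \<i>))
    \<and> is_asymptote_at m0 m1 m2 (of_real (fst m1 - fst m2)) (of_real (snd m1 - snd m2)) L0
    \<and> is_asymptote_at m0 m1 m2 (of_real (fst m2 - fst m0)) (of_real (snd m2 - snd m0)) L1
    \<and> is_asymptote_at m0 m1 m2 (of_real (fst m0 - fst m1)) (of_real (snd m0 - snd m1)) L2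
    \<and> L0 \<inter> L1 \<inter> L2 = {}"
proof -
  interpret tri m0 m1 m2 using noncollinear by unfold_locales
  have W: "W = WW" unfolding W_def WW_def ..
  show ?thesis
    unfolding L0_def L1_def L2_def W m_coords
    using ideal_char[unfolded m_coords] asym1 asym2 asym3 lines_disjoint by blast
qed

end
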